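(* Let $n\ge 1$ and let $\mathbf x=(x_1,\dots,x_n)\in[0,1]^n$ be any profile. Let $n_1=|\{i: x_i\in[0,\tfrac12]\}|$ and $n_2=|\{i: x_i\in(\tfrac12,1]\}|$. The Majority Vote mechanism outputs $y=0$ if $n_1\le n_2$ and $y=1$ otherwise. Then for every finite $p>0$, $$\max_{z\in[0,1]}\Big(\sum_{i=1}^n |x_i-z|^p\Big)^{1/p}\le (2^p+1)^{1/p}\Big(\sum_{i=1}^n |x_i-y|^p\Big)^{1/p},$$ and $$\max_{z\in[0,1]}\max_{i}|x_i-z|\le 2\max_i |x_i-y|.$$ That is, Majority Vote is a $(2^p+1)^{1/p}$-approximation for the $L_p$ social utility for every finite $p>0$ and a $2$-approximation for the $L_\infty$ social utility (maximum utility).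
   Context: Obnoxious facility location on $[0,1]$: $n$ agents report locations $x_i\in[0,1]$; a facility is placed at $y\in[0,1]$; agent $i$'s utility is $u(x_i,y)=|x_i-y|$. The $L_p$ social utility of $y$ is $\mathrm{su}_p(y,\mathbf x)=(\sum_i u(x_i,y)^p)^{1/p}$, and for $p=+\infty$ it is $\max_i u(x_i,y)$. A deterministic mechanism $f$ is an $\alpha$-approximation if $\max_{z\in[0,1]}\mathrm{su}_p(z,\mathbf x)\le \alpha\,\mathrm{su}_p(f(\mathbf x),\mathbf x)$ for all profiles $\mathbf x$. *)

theory Defs
  imports "HOL-Analysis.Analysis"
begin

text \<open>A profile of n agents is x :: nat => real, agents indexed by {..<n}.
  Utility of agent i for facility y is |x i - y|.\<close>

definition su_p :: "real \<Rightarrow> nat \<Rightarrow> (nat \<Rightarrow> real) \<Rightarrow> real \<Rightarrow> real" where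
  "su_p p n x y = (\<Sum>i<n. \<bar>x i - y\<bar> powr p) powr (1 / p)"

definition su_inf :: "nat \<Rightarrow> (nat \<Rightarrow> real) \<Rightarrow> real \<Rightarrow> real" where
  "su_inf n x y = Max ((\<lambda>i. \<bar>x i - y\<bar>) ` {..<n})"

definition n1 :: "nat \<Rightarrow> (nat \<Rightarrow> real) \<Rightarrow> nat" where
  "n1 n x = card {i\<in>{..<n}. x i \<in> {0..1/2}}"

definition n2 :: "nat \<Rightarrow> (nat \<Rightarrow> real) \<Rightarrow> nat" where
  "n2 n x = card {i\<in>{..<n}. x i \<in> {1/2<..1}}"

definition majority_vote :: "nat \<Rightarrow> (nat \<Rightarrow> real) \<Rightarrow> real" where
  "majority_vote n x = (if n1 n x \<le> n2 n x then 0 else 1)"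

end

theory Submission
  imports Defs
begin

lemma key_sum:
  fixes u v :: "nat \<Rightarrow> real" and p :: real
  assumes p: "p > 0" and G: "G \<subseteq> {..<n}"
    and card: "card ({..<n} - G) \<le> card G"
    and g: "\<forall>i\<in>G. 0 \<le> u i \<and> u i \<le> v i \<and> 1/2 \<le> v i"
    and b: "\<forall>i\<in>{..<n} - G. 0 \<le> u i \<and> u i \<le> 1"
    and v: "\<forall>i<n. 0 \<le> v i"
  shows "(\<Sum>i<n. u i powr p) \<le> (2 powr p + 1) * (\<Sum>i<n. v i powr p)"
proof -
  have fin: "finite G" using G finite_subset by blast
  have split: "\<And>f. (\<Sum>i<n. f i) = (\<Sum>i\<in>G. f i) + (\<Sum>i\<in>{..<n} - G. f i)"
    using sum.subset_diff[OF G finite_lessThan] by (simp add: add.commute)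
  have "(\<Sum>i\<in>{..<n} - G. u i powr p) \<le> (\<Sum>i\<in>{..<n} - G. 1)"
    apply (rule sum_mono)
  proof -
    fix i assume i: "i \<in> {..<n} - G"
    have "\<bar>u i\<bar> \<le> 1" using b i by auto
    then show "u i powr p \<le> 1" using p by (intro powr_le1) auto
  qed
  also have "\<dots> \<le> (\<Sum>i\<in>G. (1::real))" using card by simp
  also have "\<dots> \<le> (\<Sum>i\<in>G. 2 powr p * v i powr p)"
  proof (rule sum_mono)
    fix i assume i: "i \<in> G"
    have "(1/2) powr p \<le> v i powr p" using g i p by (intro powr_mono2) auto
    hence "2 powr p * (1/2) powr p \<le> 2 powr p * v i powr p" by simp
    moreover have "2 powr p * (1/2) powr p = 1"
      by (simp add: powr_mult[symmetric])
    ultimately show "1 \<le> 2 powr p * v i powr p" by simp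
  qed
  finally have B: "(\<Sum>i\<in>{..<n} - G. u i powr p) \<le> 2 powr p * (\<Sum>i\<in>G. v i powr p)"
    by (simp add: sum_distrib_left)
  have A: "(\<Sum>i\<in>G. u i powr p) \<le> (\<Sum>i\<in>G. v i powr p)"
    apply (rule sum_mono) using g p by (auto intro: powr_mono2)
  have C: "(\<Sum>i\<in>G. v i powr p) \<le> (\<Sum>i<n. v i powr p)"
    using split[of "\<lambda>i. v i powr p"] by (simp add: sum_nonneg)
  have "(\<Sum>i<n. u i powr p) \<le> (2 powr p + 1) * (\<Sum>i\<in>G. v i powr p)"
    using split[of "\<lambda>i. u i powr p"] A B by (simp add: algebra_simps)
  also have "\<dots> \<le> (2 powr p + 1) * (\<Sum>i<n. v i powr p)"
    using C by (intro mult_left_mono) auto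
  finally show ?thesis .
qed

lemma key_p:
  fixes u v :: "nat \<Rightarrow> real" and p :: real
  assumes p: "p > 0" and G: "G \<subseteq> {..<n}"
    and card: "card ({..<n} - G) \<le> card G"
    and g: "\<forall>i\<in>G. 0 \<le> u i \<and> u i \<le> v i \<and> 1/2 \<le> v i"
    and b: "\<forall>i\<in>{..<n} - G. 0 \<le> u i \<and> u i \<le> 1"
    and v: "\<forall>i<n. 0 \<le> v i"
  shows "(\<Sum>i<n. u i powr p) powr (1/p) \<le> (2 powr p + 1) powr (1/p) * (\<Sum>i<n. v i powr p) powr (1/p)"
proof -
  have "(\<Sum>i<n. u i powr p) powr (1/p) \<le> ((2 powr p + 1) * (\<Sum>i<n. v i powr p)) powr (1/p)"
    using key_sum[OF assms] p by (intro powr_mono2) (auto intro: sum_nonneg)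
  also have "\<dots> = (2 powr p + 1) powr (1/p) * (\<Sum>i<n. v i powr p) powr (1/p)"
    by (simp add: powr_mult sum_nonneg)
  finally show ?thesis .
qed

theorem theorem1:
  fixes n :: nat and x :: "nat \<Rightarrow> real"
  assumes "n \<ge> 1"
    and "\<forall>i<n. x i \<in> {0..1}"
  shows "(\<forall>p::real. p > 0 \<longrightarrow>
            (SUP z\<in>{0..1}. su_p p n x z)
              \<le> (2 powr p + 1) powr (1 / p) * su_p p n x (majority_vote n x))
       \<and> (SUP z\<in>{0..1}. su_inf n x z) \<le> 2 * su_inf n x (majority_vote n x)"
proof -
  define L where "L = {i\<in>{..<n}. x i \<in> {0..1/2}}"
  define R where "R = {i\<in>{..<n}. x i \<in> {1/2<..1}}"
  have LR: "{..<n} - R = L" "{..<n} - L = R" "L \<subseteq> {..<n}" "R \<subseteq> {..<n}"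
    using assms(2) unfolding L_def R_def by auto
  have cardLR: "card L + card R = n"
  proof -
    have "L \<union> R = {..<n}" "L \<inter> R = {}" using assms(2) unfolding L_def R_def by auto
    moreover have "finite L" "finite R" using LR(3,4) finite_subset by auto
    ultimately show ?thesis using card_Un_disjoint[of L R] by simp
  qed
  have n1: "n1 n x = card L" and n2: "n2 n x = card R" unfolding n1_def n2_def L_def R_def by auto
  define y where "y = majority_vote n x"
  show ?thesis
  proof (cases "card L \<le> card R")
    case True
    hence y: "y = 0" unfolding y_def majority_vote_def n1 n2 by simp
    have part1: "\<forall>p::real. p > 0 \<longrightarrow> (SUP z\<in>{0..1}. su_p p n x z) \<le> (2 powr p + 1) powr (1 / p) * su_p p n x y"
    proof (intro allI impI)
      fix p :: real assume p: "p > 0"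
      show "(SUP z\<in>{0..1}. su_p p n x z) \<le> (2 powr p + 1) powr (1 / p) * su_p p n x y"
      proof (rule cSUP_least)
        fix z :: real assume z: "z \<in> {0..1}"
        show "su_p p n x z \<le> (2 powr p + 1) powr (1 / p) * su_p p n x y"
          unfolding su_p_def y
          apply (rule key_p[where G = R, OF p])
          using LR True z assms(2) unfolding R_def by auto
      qed simp
    qed
    obtain j where j: "j \<in> R"
    proof -
      have "R \<noteq> {}" proof
        assume "R = {}" then show False using True cardLR assms(1) by simp
      qed
      then show ?thesis using that by blast
    qed
    have jn: "j < n" "x j > 1/2" using j unfolding R_def by auto
    have fin: "finite ((\<lambda>i. \<bar>x i - y\<bar>) ` {..<n})" by simp
    have "\<bar>x j - y\<bar> \<le> su_inf n x y" unfolding su_inf_def using jn fin by (intro Max_ge) auto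
    hence M: "1 \<le> 2 * su_inf n x y" using jn y by simp
    have part2: "(SUP z\<in>{0..1}. su_inf n x z) \<le> 2 * su_inf n x y"
    proof (rule cSUP_least)
      fix z :: real assume z: "z \<in> {0..1}"
      have "su_inf n x z \<le> 1" unfolding su_inf_def
        using assms z by (subst Max_le_iff) (auto simp: lessThan_empty_iff)
      thus "su_inf n x z \<le> 2 * su_inf n x y" using M by simp
    qed simp
    show ?thesis using part1 part2 y_def by simp
  next
    case False
    hence y: "y = 1" unfolding y_def majority_vote_def n1 n2 by simp
    have part1: "\<forall>p::real. p > 0 \<longrightarrow> (SUP z\<in>{0..1}. su_p p n x z) \<le> (2 powr p + 1) powr (1 / p) * su_p p n x y"
    proof (intro allI impI)
      fix p :: real assume p: "p > 0"
      show "(SUP z\<in>{0..1}. su_p p n x z) \<le> (2 powr p + 1) powr (1 / p) * su_p p n x y"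
      proof (rule cSUP_least)
        fix z :: real assume z: "z \<in> {0..1}"
        show "su_p p n x z \<le> (2 powr p + 1) powr (1 / p) * su_p p n x y"
          unfolding su_p_def y
          apply (rule key_p[where G = L, OF p])
          using LR False z assms(2) unfolding L_def by auto
      qed simp
    qed
    obtain j where j: "j \<in> L"
    proof -
      have "L \<noteq> {}" using False by auto
      then show ?thesis using that by blast
    qed
    have jn: "j < n" "x j \<le> 1/2" using j unfolding L_def by auto
    have fin: "finite ((\<lambda>i. \<bar>x i - y\<bar>) ` {..<n})" by simp
    have "\<bar>x j - y\<bar> \<le> su_inf n x y" unfolding su_inf_def using jn fin by (intro Max_ge) auto
    hence M: "1 \<le> 2 * su_inf n x y" using jn y by simp
    have part2: "(SUP z\<in>{0..1}. su_inf n x z) \<le> 2 * su_inf n x y"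
    proof (rule cSUP_least)
      fix z :: real assume z: "z \<in> {0..1}"
      have "su_inf n x z \<le> 1" unfolding su_inf_def
        using assms z by (subst Max_le_iff) (auto simp: lessThan_empty_iff)
      thus "su_inf n x z \<le> 2 * su_inf n x y" using M by simp
    qed simp
    show ?thesis using part1 part2 y_def by simp
  qed
qed

end
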